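(* In the setting below (Algorithm 1), when all agents are truthful, with $n_i=|X_i|\ge1$ and $|Z_i|=\sum_{j\ne i}n_j-1\ge1$, $$0\le\mathbb E[L_i(\mathrm{id},\dots,\mathrm{id})]\le\frac14\Big(\frac1{|X_i|}+\frac1{|Z_i|}\Big).$$ Moreover, if $\Pi$ is concentrated on continuous (atomless) distributions on $\mathbb R$, then $$\frac1{6|Z_i|}\le\mathbb E[L_i(\mathrm{id},\dots,\mathrm{id})]\le\frac16\Big(\frac1{|X_i|}+\frac1{|Z_i|}\Big).$$
   Context: Setting (Algorithm 1). Fix $m\ge 2$ agents. A prior $\Pi$ is a probability distribution on the set of Borel probability distributions on $\mathbb{R}$. A random distribution $D\sim\Pi$ is drawn; conditionally on $D$, agent $i$ holds $X_i=(X_{i,1},\dots,X_{i,n_i})$ with entries i.i.d. from $D$, independent across agents. Under truthful reporting ($\mathrm{id}$) each agent submits its own dataset. For a finite nonempty multiset $S\subset\mathbb R$, $F_S(t)=\frac1{|S|}\sum_{s\in S}\mathbf 1\{s\le t\}$. Mechanism: $X_{-i}=\bigcup_{j\ne i}X_j$, $T_i$ chosen uniformly at random from $X_{-i}$, $Z_i=X_{-i}\setminus\{T_i\}$, and $L_i=\big(\mathbb E[F_{Z_i}(T_i)\mid X_{i,1},\dots,X_{i,n_i},T_i]-F_{Z_i}(T_i)\big)^2$, the conditional expectation taken under the model $D\sim\Pi$. Expectations are over $D\sim\Pi$, data and mechanism randomness. *)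

theory Defs
  imports "HOL-Probability.Probability" "HOL-Library.Multiset"
begin

text \<open>Data of agent j is indexed by pairs (j,k), k < n j. All data points of all m agents.\<close>
definition data_idx :: "nat \<Rightarrow> (nat \<Rightarrow> nat) \<Rightarrow> (nat \<times> nat) set" where
  "data_idx m n = {(j,k). j < m \<and> k < n j}"

definition own_idx :: "(nat \<Rightarrow> nat) \<Rightarrow> nat \<Rightarrow> (nat \<times> nat) set" where
  "own_idx n i = {(j,k). j = i \<and> k < n i}"

definition others_idx :: "nat \<Rightarrow> (nat \<Rightarrow> nat) \<Rightarrow> nat \<Rightarrow> (nat \<times> nat) set" where
  "others_idx m n i = {(j,k). j < m \<and> j \<noteq> i \<and> k < n j}"

definition ecdf :: "real multiset \<Rightarrow> real \<Rightarrow> real" where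
  "ecdf S t = real (size (filter_mset (\<lambda>s. s \<le> t) S)) / real (size S)"

text \<open>Full model: D ~ prior, all data i.i.d. from D given D, and the mechanism picks
  the index of T_i uniformly among the indices of X_{-i}.  A sample point is
  (x, t): x the data array, t the index of T_i.\<close>
definition model :: "real measure measure \<Rightarrow> nat \<Rightarrow> (nat \<Rightarrow> nat) \<Rightarrow> nat
    \<Rightarrow> ((nat \<times> nat \<Rightarrow> real) \<times> (nat \<times> nat)) measure" where
  "model prior m n i =
     (prior \<bind> (\<lambda>D. PiM (data_idx m n) (\<lambda>_. D)))
       \<Otimes>\<^sub>M measure_pmf (pmf_of_set (others_idx m n i))"

definition T_val :: "(nat \<times> nat \<Rightarrow> real) \<times> (nat \<times> nat) \<Rightarrow> real" where
  "T_val \<omega> = fst \<omega> (snd \<omega>)"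

definition Z_set :: "nat \<Rightarrow> (nat \<Rightarrow> nat) \<Rightarrow> nat \<Rightarrow> (nat \<times> nat \<Rightarrow> real) \<times> (nat \<times> nat) \<Rightarrow> real multiset" where
  "Z_set m n i \<omega> = image_mset (fst \<omega>) (mset_set (others_idx m n i - {snd \<omega>}))"

definition stat :: "nat \<Rightarrow> (nat \<Rightarrow> nat) \<Rightarrow> nat \<Rightarrow> (nat \<times> nat \<Rightarrow> real) \<times> (nat \<times> nat) \<Rightarrow> real" where
  "stat m n i \<omega> = ecdf (Z_set m n i \<omega>) (T_val \<omega>)"

definition info_alg :: "real measure measure \<Rightarrow> nat \<Rightarrow> (nat \<Rightarrow> nat) \<Rightarrow> nat
    \<Rightarrow> ((nat \<times> nat \<Rightarrow> real) \<times> (nat \<times> nat)) measure" where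
  "info_alg prior m n i =
     vimage_algebra (space (model prior m n i))
       (\<lambda>\<omega>. (restrict (fst \<omega>) (own_idx n i), T_val \<omega>))
       (PiM (own_idx n i) (\<lambda>_. borel) \<Otimes>\<^sub>M borel)"

text \<open>Loss L_i under truthful reporting.\<close>
definition loss :: "real measure measure \<Rightarrow> nat \<Rightarrow> (nat \<Rightarrow> nat) \<Rightarrow> nat
    \<Rightarrow> (nat \<times> nat \<Rightarrow> real) \<times> (nat \<times> nat) \<Rightarrow> real" where
  "loss prior m n i \<omega> =
     (real_cond_exp (model prior m n i) (info_alg prior m n i) (stat m n i) \<omega> - stat m n i \<omega>)\<^sup>2"

definition expected_loss :: "real measure measure \<Rightarrow> nat \<Rightarrow> (nat \<Rightarrow> nat) \<Rightarrow> nat \<Rightarrow> real" where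
  "expected_loss prior m n i = integral\<^sup>L (model prior m n i) (loss prior m n i)"

end

theory Submission
  imports Defs
begin


definition ind :: "'i \<Rightarrow> 'i \<Rightarrow> ('i \<Rightarrow> real) \<Rightarrow> real" where
  "ind r t x = of_bool (x r \<le> x t)"

locale dm =
  fixes D :: "real measure" and I :: "'i set"
  assumes D: "prob_space D" and setsD: "sets D = sets borel" and finI: "finite I"
begin

abbreviation PD where "PD \<equiv> PiM I (\<lambda>_. D)"

lemma spaceD[simp]: "space D = UNIV"
  using sets_eq_imp_space_eq[OF setsD] by simp

lemma measD[measurable_cong]: "sets D = sets borel" by (rule setsD)

sublocale P: product_prob_space "\<lambda>_. D" I
  using D by (simp add: product_prob_space_def product_sigma_finite_def prob_space_imp_sigma_finite product_prob_space_axioms_def)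

lemma PD_prob: "prob_space PD"
  by (simp add: D prob_space_PiM)

lemma int_bounded:
  assumes "f \<in> borel_measurable PD" "\<And>x. x \<in> space PD \<Longrightarrow> \<bar>f x\<bar> \<le> (B::real)"
  shows "integrable PD f"
  by (rule finite_measure.integrable_const_bound[where B=B])
     (use assms PD_prob prob_space.finite_measure in auto)

lemma L:
  assumes r: "r \<in> I" and f: "integrable PD (f::_\<Rightarrow>real)" and g: "integrable PD g"
    and eq: "\<And>x. x \<in> space PD \<Longrightarrow> (\<integral>y. f (x(r:=y)) \<partial>D) = g x"
  shows "integral\<^sup>L PD f = integral\<^sup>L PD g"
proof -
  let ?I = "I - {r}"
  have II: "insert r ?I = I" using r by auto
  have fi: "finite ?I" using finI by auto
  have pu: "measure D UNIV = 1" using prob_space.prob_space[OF D] by simp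
  have *: "integral\<^sup>L PD h = (\<integral>x. (\<integral>y. h (x(r:=y)) \<partial>D) \<partial>PiM ?I (\<lambda>_. D))"
    if "integrable PD h" for h :: "_ \<Rightarrow> real"
    using P.product_integral_insert[OF fi, of r h] that II by simp
  have "integral\<^sup>L PD f = (\<integral>x. (\<integral>y0. (\<integral>y. f (x(r:=y)) \<partial>D) \<partial>D) \<partial>PiM ?I (\<lambda>_. D))"
    by (simp add: *[OF f] pu)
  also have "\<dots> = (\<integral>x. (\<integral>y0. g (x(r:=y0)) \<partial>D) \<partial>PiM ?I (\<lambda>_. D))"
  proof (intro Bochner_Integration.integral_cong refl)
    fix x y0 assume x: "x \<in> space (PiM ?I (\<lambda>_. D))" and "y0 \<in> space D"
    have "x(r:=y0) \<in> space PD" using x r by (auto simp: space_PiM PiE_def extensional_def)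
    from eq[OF this] show "(\<integral>y. f (x(r:=y)) \<partial>D) = g (x(r:=y0))" by simp
  qed
  also have "\<dots> = integral\<^sup>L PD g" by (simp add: *[OF g] pu)
  finally show ?thesis .
qed

definition F :: "real \<Rightarrow> real" where "F s = measure D {..s}"

lemma F_mono: "mono F"
  unfolding F_def mono_def
  by (intro allI impI finite_measure.finite_measure_mono) (auto simp: setsD D prob_space.finite_measure)

lemma F_meas[measurable]: "F \<in> borel_measurable borel"
  by (rule borel_measurable_mono[OF F_mono])

lemma F_bounds: "0 \<le> F s" "F s \<le> 1"
  unfolding F_def by (auto simp: prob_space.prob_le_1[OF D] setsD)

lemma int_ind: "(\<integral>y. of_bool (y \<le> c) \<partial>D) = F c"
proof -
  have "(\<integral>y. of_bool (y \<le> c) \<partial>D) = (\<integral>y. indicator {..c} y \<partial>D)"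
    by (intro Bochner_Integration.integral_cong) (auto simp: indicator_def)
  also have "\<dots> = F c" unfolding F_def
    using Bochner_Integration.integral_indicator[of D "{..c}"] finite_measure.emeasure_finite[OF prob_space.finite_measure[OF D]]
    by (auto simp: setsD)
  finally show ?thesis .
qed

lemma meas_coord[measurable]: "r \<in> I \<Longrightarrow> (\<lambda>x. x r) \<in> measurable PD borel"
  by (metis measurable_component_singleton measurable_cong_sets setsD)

lemma PD_sets: "sets PD = sets (PiM I (\<lambda>_. borel))"
  by (rule sets_PiM_cong[OF refl setsD])

lemma PD_space: "space PD = space (PiM I (\<lambda>_. borel))"
  by (simp add: space_PiM)

lemma pred_le_coord[measurable]: "r \<in> I \<Longrightarrow> t \<in> I \<Longrightarrow> Measurable.pred PD (\<lambda>x. x r \<le> x t)"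
  unfolding pred_def PD_sets PD_space
  by (intro borel_measurable_le measurable_component_singleton) auto

lemma A1:
  assumes r: "r \<in> I" and t: "t \<in> I" and rt: "r \<noteq> t"
    and hm: "h \<in> borel_measurable PD" and hb: "\<And>x. x \<in> space PD \<Longrightarrow> \<bar>h x\<bar> \<le> B"
    and hc: "\<And>x y. x \<in> space PD \<Longrightarrow> h (x(r:=y)) = h x"
  shows "(\<integral>x. h x * of_bool (x r \<le> x t) \<partial>PD) = (\<integral>x. h x * F (x t) \<partial>PD)"
proof (rule L[OF r])
  have B0: "0 \<le> B" using hb[of "\<lambda>i\<in>I. 0"] by (auto simp: space_PiM) 
  show "integrable PD (\<lambda>x. h x * of_bool (x r \<le> x t))"
  proof (rule int_bounded[where B=B])
    have [measurable]: "Measurable.pred PD (\<lambda>x. x r \<le> x t)" using r t by (rule pred_le_coord)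
    show "(\<lambda>x. h x * of_bool (x r \<le> x t)) \<in> borel_measurable PD" using hm by measurable
  qed (use hb B0 in \<open>auto simp: abs_mult\<close>)
  show "integrable PD (\<lambda>x. h x * F (x t))"
  proof (rule int_bounded[where B=B])
    show "(\<lambda>x. h x * F (x t)) \<in> borel_measurable PD" using t hm by measurable
    fix x assume x: "x \<in> space PD"
    have "\<bar>h x * F (x t)\<bar> = \<bar>h x\<bar> * F (x t)" using F_bounds by (simp add: abs_mult)
    also have "\<dots> \<le> B * 1" using hb[OF x] F_bounds B0 by (intro mult_mono) auto
    finally show "\<bar>h x * F (x t)\<bar> \<le> B" by simp
  qed
  fix x assume x: "x \<in> space PD"
  have "(\<integral>y. h (x(r := y)) * of_bool ((x(r := y)) r \<le> (x(r := y)) t) \<partial>D)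
      = (\<integral>y. h x * of_bool (y \<le> x t) \<partial>D)"
    using rt hc[OF x] by simp
  also have "\<dots> = h x * F (x t)" by (simp add: int_ind)
  finally show "(\<integral>y. h (x(r := y)) * of_bool ((x(r := y)) r \<le> (x(r := y)) t) \<partial>D) = h x * F (x t)" .
qed

lemma A2:
  fixes \<phi> :: "real \<Rightarrow> real"
  assumes t: "t \<in> I" and pm: "\<phi> \<in> borel_measurable borel" and pb: "\<And>s. \<bar>\<phi> s\<bar> \<le> B"
  shows "(\<integral>x. \<phi> (x t) \<partial>PD) = (\<integral>s. \<phi> s \<partial>D)"
proof -
  have "(\<integral>x. \<phi> (x t) \<partial>PD) = (\<integral>x. (\<integral>s. \<phi> s \<partial>D) \<partial>PD)"
  proof (rule L[OF t])
    show "integrable PD (\<lambda>x. \<phi> (x t))"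
      by (rule int_bounded[where B=B]) (use t pm pb in auto)
    show "integrable PD (\<lambda>x. (\<integral>s. \<phi> s \<partial>D))"
      by (rule int_bounded[where B="\<bar>\<integral>s. \<phi> s \<partial>D\<bar>"]) auto
  qed simp
  also have "\<dots> = (\<integral>s. \<phi> s \<partial>D)" using prob_space.prob_space[OF PD_prob] by simp
  finally show ?thesis .
qed

lemma ind_meas[measurable]: "r \<in> I \<Longrightarrow> t \<in> I \<Longrightarrow> ind r t \<in> borel_measurable PD"
  unfolding ind_def by measurable

lemma ind_bounds: "0 \<le> ind r t x" "ind r t x \<le> 1" "\<bar>ind r t x\<bar> \<le> 1" "ind r t x * ind r t x = ind r t x"
  unfolding ind_def by auto

lemma Ft_meas[measurable]: "t \<in> I \<Longrightarrow> (\<lambda>x. F (x t)) \<in> borel_measurable PD"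
  using meas_coord by measurable

lemma int_prod:
  assumes "f \<in> borel_measurable PD" "g \<in> borel_measurable PD"
    "\<And>x. x \<in> space PD \<Longrightarrow> \<bar>f x\<bar> \<le> (B::real)" "\<And>x. x \<in> space PD \<Longrightarrow> \<bar>g x\<bar> \<le> C"
  shows "integrable PD (\<lambda>x. f x * g x)"
proof (rule int_bounded[where B="B*C"])
  show "(\<lambda>x. f x * g x) \<in> borel_measurable PD" using assms by measurable
  fix x assume x: "x \<in> space PD"
  show "\<bar>f x * g x\<bar> \<le> B * C" unfolding abs_mult
    using assms(3,4)[OF x] by (intro mult_mono) auto
qed

definition alpha where "alpha = (\<integral>s. F s \<partial>D)"
definition beta where "beta = (\<integral>s. F s * F s \<partial>D)"

lemma ind_alpha:
  assumes r: "r \<in> I" and t: "t \<in> I" and rt: "r \<noteq> t"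
  shows "(\<integral>x. ind r t x \<partial>PD) = alpha"
proof -
  have "(\<integral>x. ind r t x \<partial>PD) = (\<integral>x. 1 * of_bool (x r \<le> x t) \<partial>PD)"
    by (simp add: ind_def)
  also have "\<dots> = (\<integral>x. 1 * F (x t) \<partial>PD)"
    by (rule A1[OF r t rt, where B=1]) auto
  also have "\<dots> = alpha" unfolding alpha_def
    using A2[OF t F_meas, of 1] F_bounds by simp
  finally show ?thesis .
qed

lemma ind_beta:
  assumes r: "r \<in> I" and r': "r' \<in> I" and t: "t \<in> I" and rt: "r \<noteq> t" "r' \<noteq> t" "r \<noteq> r'"
  shows "(\<integral>x. ind r t x * ind r' t x \<partial>PD) = beta"
proof -
  have "(\<integral>x. ind r t x * ind r' t x \<partial>PD) = (\<integral>x. ind r' t x * of_bool (x r \<le> x t) \<partial>PD)"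
    by (simp add: ind_def mult.commute)
  also have "\<dots> = (\<integral>x. ind r' t x * F (x t) \<partial>PD)"
    by (rule A1[OF r t rt(1), where B=1]) (use r' t rt ind_bounds in \<open>auto simp: ind_def\<close>)
  also have "\<dots> = (\<integral>x. F (x t) * of_bool (x r' \<le> x t) \<partial>PD)"
    by (simp add: ind_def mult.commute)
  also have "\<dots> = (\<integral>x. F (x t) * F (x t) \<partial>PD)"
    by (rule A1[OF r' t rt(2), where B=1]) (use t rt F_bounds in \<open>auto simp: abs_le_iff\<close>)
  also have "\<dots> = beta" unfolding beta_def
    by (rule A2[OF t, where B=1]) (use F_bounds in \<open>auto simp: abs_le_iff mult_le_one\<close>)
  finally show ?thesis .
qed

lemma E1:
  assumes Y: "Y \<subseteq> I" "Y \<noteq> {}" and t: "t \<in> I" "t \<notin> Y"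
    and hm: "h \<in> borel_measurable PD" and hb: "\<And>x. x \<in> space PD \<Longrightarrow> \<bar>h x\<bar> \<le> B"
    and hc: "\<And>r x y. r \<in> Y \<Longrightarrow> x \<in> space PD \<Longrightarrow> h (x(r:=y)) = h x"
  shows "(\<integral>x. (h x - (\<Sum>r\<in>Y. ind r t x) / card Y)\<^sup>2 \<partial>PD)
       = (\<integral>x. (h x - F (x t))\<^sup>2 \<partial>PD) + (alpha - beta) / card Y"
proof -
  have fY: "finite Y" using Y finI finite_subset by auto
  define z where "z = real (card Y)"
  have z0: "z > 0" using Y fY by (simp add: z_def card_gt_0_iff)
  have rI: "r \<in> I" "r \<noteq> t" if "r \<in> Y" for r using that Y t by auto
  have B0: "0 \<le> B" using hb[of "\<lambda>i\<in>I. 0"] by (auto simp: space_PiM)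
  have Fb: "\<bar>F s\<bar> \<le> 1" for s using F_bounds by auto
  note ib = ind_bounds(3)
  have i_hh: "integrable PD (\<lambda>x. h x * h x)" by (rule int_prod[OF hm hm hb hb])
  have i_hi: "integrable PD (\<lambda>x. h x * ind r t x)" if "r \<in> Y" for r
    by (rule int_prod[OF hm ind_meas[OF rI(1)[OF that] t(1)] hb ib])
  have i_ii: "integrable PD (\<lambda>x. ind r t x * ind r' t x)" if "r \<in> Y" "r' \<in> Y" for r r'
    by (rule int_prod[OF ind_meas[OF rI(1)[OF that(1)] t(1)] ind_meas[OF rI(1)[OF that(2)] t(1)] ib ib])
  have i_hF: "integrable PD (\<lambda>x. h x * F (x t))"
    by (rule int_prod[OF hm Ft_meas[OF t(1)] hb Fb])
  have i_FF: "integrable PD (\<lambda>x. F (x t) * F (x t))"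
    by (rule int_prod[OF Ft_meas[OF t(1)] Ft_meas[OF t(1)] Fb Fb])
  have hi: "(\<integral>x. h x * ind r t x \<partial>PD) = (\<integral>x. h x * F (x t) \<partial>PD)" if "r \<in> Y" for r
    unfolding ind_def by (rule A1[OF rI(1)[OF that] t(1) rI(2)[OF that] hm hb hc[OF that]])
  have ii: "(\<integral>x. ind r t x * ind r' t x \<partial>PD) = (if r = r' then alpha else beta)"
    if "r \<in> Y" "r' \<in> Y" for r r'
  proof (cases "r = r'")
    case True
    then show ?thesis using ind_alpha[OF rI(1)[OF that(1)] t(1) rI(2)[OF that(1)]] by (simp add: ind_bounds(4))
  next
    case False
    then show ?thesis using ind_beta[OF rI(1)[OF that(1)] rI(1)[OF that(2)] t(1) rI(2)[OF that(1)] rI(2)[OF that(2)]] by simp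
  qed
  have iii: "(\<Sum>r'\<in>Y. (\<integral>x. ind r t x * ind r' t x \<partial>PD)) = alpha + (z - 1) * beta" if "r \<in> Y" for r
  proof -
    have "(\<Sum>r'\<in>Y. (\<integral>x. ind r t x * ind r' t x \<partial>PD)) = (\<Sum>r'\<in>Y. (if r = r' then alpha else beta))"
      using ii that by (intro sum.cong) auto
    also have "\<dots> = (\<Sum>r'\<in>Y. beta + (if r' = r then alpha - beta else 0))"
      by (intro sum.cong) auto
    also have "\<dots> = z * beta + (alpha - beta)"
      using fY that by (simp add: sum.distrib z_def)
    also have "\<dots> = alpha + (z - 1) * beta" by (simp add: algebra_simps)
    finally show ?thesis .
  qed
  have pw0: "(a - S / z)\<^sup>2 = a * a - (2 / z) * (a * S) + (1 / z^2) * (S * S)" for a S :: real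
    using z0 by (simp add: power2_eq_square field_simps)
  have pw: "(h x - (\<Sum>r\<in>Y. ind r t x) / card Y)\<^sup>2 = h x * h x - (2 / z) * (\<Sum>r\<in>Y. h x * ind r t x)
      + (1 / z^2) * (\<Sum>r\<in>Y. \<Sum>r'\<in>Y. ind r t x * ind r' t x)" for x
  proof -
    have a: "(\<Sum>r\<in>Y. ind r t x) * (\<Sum>r\<in>Y. ind r t x) = (\<Sum>r\<in>Y. \<Sum>r'\<in>Y. ind r t x * ind r' t x)"
      by (rule sum_product)
    have b: "h x * (\<Sum>r\<in>Y. ind r t x) = (\<Sum>r\<in>Y. h x * ind r t x)" by (rule sum_distrib_left)
    show ?thesis unfolding z_def[symmetric] pw0 a b ..
  qed
  have iB: "integrable PD (\<lambda>x. \<Sum>r\<in>Y. h x * ind r t x)" using i_hi by (intro Bochner_Integration.integrable_sum) auto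
  have iC: "integrable PD (\<lambda>x. \<Sum>r\<in>Y. \<Sum>r'\<in>Y. ind r t x * ind r' t x)" using i_ii by (intro Bochner_Integration.integrable_sum) auto
  have "(\<integral>x. (h x - (\<Sum>r\<in>Y. ind r t x) / card Y)\<^sup>2 \<partial>PD)
      = (\<integral>x. h x * h x - (2 / z) * (\<Sum>r\<in>Y. h x * ind r t x)
      + (1 / z^2) * (\<Sum>r\<in>Y. \<Sum>r'\<in>Y. ind r t x * ind r' t x) \<partial>PD)"
    by (simp only: pw)
  also have "\<dots> = (\<integral>x. h x * h x \<partial>PD) - (2 / z) * (\<integral>x. (\<Sum>r\<in>Y. h x * ind r t x) \<partial>PD)
      + (1 / z^2) * (\<integral>x. (\<Sum>r\<in>Y. \<Sum>r'\<in>Y. ind r t x * ind r' t x) \<partial>PD)"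
    using i_hh iB iC
    by (simp add: Bochner_Integration.integral_add Bochner_Integration.integral_diff
        Bochner_Integration.integral_mult_right del: integral_mult_right_zero)
  also have "\<dots> = (\<integral>x. h x * h x \<partial>PD) - (2 / z) * (\<Sum>r\<in>Y. (\<integral>x. h x * ind r t x \<partial>PD))
      + (1 / z^2) * (\<Sum>r\<in>Y. \<Sum>r'\<in>Y. (\<integral>x. ind r t x * ind r' t x \<partial>PD))"
  proof -
    have "(\<integral>x. (\<Sum>r\<in>Y. h x * ind r t x) \<partial>PD) = (\<Sum>r\<in>Y. (\<integral>x. h x * ind r t x \<partial>PD))"
      using i_hi by (intro Bochner_Integration.integral_sum) auto
    moreover have "(\<integral>x. (\<Sum>r\<in>Y. \<Sum>r'\<in>Y. ind r t x * ind r' t x) \<partial>PD)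
        = (\<Sum>r\<in>Y. (\<integral>x. (\<Sum>r'\<in>Y. ind r t x * ind r' t x) \<partial>PD))"
      using i_ii by (intro Bochner_Integration.integral_sum Bochner_Integration.integrable_sum) auto
    moreover have "(\<integral>x. (\<Sum>r'\<in>Y. ind r t x * ind r' t x) \<partial>PD) = (\<Sum>r'\<in>Y. (\<integral>x. ind r t x * ind r' t x \<partial>PD))"
      if "r \<in> Y" for r using i_ii that by (intro Bochner_Integration.integral_sum) auto
    ultimately show ?thesis by simp
  qed
  also have "\<dots> = (\<integral>x. h x * h x \<partial>PD) - 2 * (\<integral>x. h x * F (x t) \<partial>PD)
      + (alpha + (z - 1) * beta) / z"
  proof -
    have "(\<Sum>r\<in>Y. (\<integral>x. h x * ind r t x \<partial>PD)) = (\<Sum>r\<in>Y. (\<integral>x. h x * F (x t) \<partial>PD))"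
      using hi by (rule sum.cong[OF refl])
    also have "\<dots> = z * (\<integral>x. h x * F (x t) \<partial>PD)" by (simp add: z_def)
    finally have 1: "(\<Sum>r\<in>Y. (\<integral>x. h x * ind r t x \<partial>PD)) = z * (\<integral>x. h x * F (x t) \<partial>PD)" .
    have "(\<Sum>r\<in>Y. \<Sum>r'\<in>Y. (\<integral>x. ind r t x * ind r' t x \<partial>PD)) = (\<Sum>r\<in>Y. alpha + (z - 1) * beta)"
      using iii by (rule sum.cong[OF refl])
    also have "\<dots> = z * (alpha + (z - 1) * beta)" by (simp add: z_def)
    finally have 2: "(\<Sum>r\<in>Y. \<Sum>r'\<in>Y. (\<integral>x. ind r t x * ind r' t x \<partial>PD)) = z * (alpha + (z - 1) * beta)" .
    have 3: "(2 / z) * (z * a) = 2 * a" "(1 / z^2) * (z * b) = b / z" for a b :: real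
      using z0 by (auto simp: power2_eq_square field_simps)
    show ?thesis unfolding 1 2 3 ..
  qed
  also have "\<dots> = (\<integral>x. h x * h x \<partial>PD) - 2 * (\<integral>x. h x * F (x t) \<partial>PD)
      + (\<integral>x. F (x t) * F (x t) \<partial>PD) + (alpha - beta) / z"
  proof -
    have "(\<integral>x. F (x t) * F (x t) \<partial>PD) = beta" unfolding beta_def
      by (rule A2[OF t(1), where B=1]) (use F_bounds in \<open>auto simp: abs_le_iff mult_le_one\<close>)
    then show ?thesis using z0 by (simp add: field_simps)
  qed
  also have "\<dots> = (\<integral>x. (h x - F (x t))\<^sup>2 \<partial>PD) + (alpha - beta) / z"
  proof -
    have "(\<integral>x. (h x - F (x t))\<^sup>2 \<partial>PD) = (\<integral>x. h x * h x - 2 * (h x * F (x t)) + F (x t) * F (x t) \<partial>PD)"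
      by (simp add: power2_eq_square algebra_simps)
    also have "\<dots> = (\<integral>x. h x * h x \<partial>PD) - 2 * (\<integral>x. h x * F (x t) \<partial>PD) + (\<integral>x. F (x t) * F (x t) \<partial>PD)"
      using i_hh i_hF i_FF by simp
    finally show ?thesis by simp
  qed
  finally show ?thesis by (simp add: z_def)
qed

lemma intD:
  assumes "f \<in> borel_measurable D" "\<And>x. \<bar>f x\<bar> \<le> (B::real)"
  shows "integrable D f"
  by (rule finite_measure.integrable_const_bound[where B=B])
     (use assms D prob_space.finite_measure in auto)

lemma alpha_beta_le: "alpha - beta \<le> 1/4"
proof -
  have i1: "integrable D F" 
    by (rule intD[where B=1]) (use F_bounds in \<open>auto simp: measurable_cong_sets[OF setsD refl]\<close>)
  have i2: "integrable D (\<lambda>s. F s * F s)"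
    by (rule intD[where B=1]) (use F_bounds in \<open>auto simp: mult_le_one measurable_cong_sets[OF setsD refl]\<close>)
  have "alpha - beta = (\<integral>s. F s - F s * F s \<partial>D)" unfolding alpha_def beta_def using i1 i2 by simp
  also have "\<dots> \<le> (\<integral>s. 1/4 \<partial>D)"
  proof (rule integral_mono)
    show "integrable D (\<lambda>s. F s - F s * F s)" using i1 i2 by simp
    show "integrable D (\<lambda>s. 1/4::real)" by simp
    fix s have "0 \<le> (F s - 1/2)^2" by simp
    then show "F s - F s * F s \<le> 1/4" by (simp add: power2_eq_square algebra_simps)
  qed
  also have "\<dots> = 1/4" using prob_space.prob_space[OF D] by simp
  finally show ?thesis .
qed

lemma eq_zero:
  assumes atomless: "\<And>x. measure D {x} = 0"
    and p: "p \<in> I" and t: "t \<in> I" and pt: "p \<noteq> t"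
  shows "(\<integral>x. of_bool (x p = x t) \<partial>PD) = (0::real)"
proof -
  have pm: "Measurable.pred PD (\<lambda>x. x p = x t)"
    unfolding pred_def PD_sets PD_space
    by (intro borel_measurable_eq measurable_component_singleton) (use p t in auto)
  have "(\<integral>x. of_bool (x p = x t) \<partial>PD) = (\<integral>x. 0 \<partial>PD :: real)"
  proof (rule L[OF p])
    show "integrable PD (\<lambda>x. of_bool (x p = x t) :: real)"
      by (rule int_bounded[where B=1]) (use pm in auto)
    fix x assume x: "x \<in> space PD"
    have "(\<integral>y. of_bool ((x(p := y)) p = (x(p := y)) t) \<partial>D) = (\<integral>y. indicator {x t} y \<partial>D)"
      using pt by (intro Bochner_Integration.integral_cong) (auto simp: indicator_def)
    also have "\<dots> = measure D {x t}"
      using Bochner_Integration.integral_indicator[of D "{x t}"] finite_measure.emeasure_finite[OF prob_space.finite_measure[OF D]]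
      by (auto simp: setsD)
    finally show "(\<integral>y. of_bool ((x(p := y)) p = (x(p := y)) t) \<partial>D) = (0::real)" using atomless pt by simp
  qed simp
  then show ?thesis by simp
qed

lemma alpha_half:
  assumes atomless: "\<And>x. measure D {x} = 0"
    and p: "p \<in> I" and t: "t \<in> I" and pt: "p \<noteq> t"
  shows "alpha = 1/2"
proof -
  have pm: "Measurable.pred PD (\<lambda>x. x p = x t)"
    unfolding pred_def PD_sets PD_space
    by (intro borel_measurable_eq measurable_component_singleton) (use p t in auto)
  have ie: "integrable PD (\<lambda>x. of_bool (x p = x t) :: real)"
    by (rule int_bounded[where B=1]) (use pm in auto)
  have i1: "integrable PD (ind p t)" by (rule int_bounded[where B=1]) (use p t ind_bounds in auto)
  have i2: "integrable PD (ind t p)" by (rule int_bounded[where B=1]) (use p t ind_bounds in auto)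
  have "(\<integral>x. ind p t x + ind t p x \<partial>PD) = (\<integral>x. 1 + of_bool (x p = x t) \<partial>PD)"
    by (intro Bochner_Integration.integral_cong) (auto simp: ind_def)
  then have "alpha + alpha = 1 + 0"
    using i1 i2 ie ind_alpha[OF p t pt] ind_alpha[OF t p pt[symmetric]] eq_zero[OF atomless p t pt]
      prob_space.prob_space[OF PD_prob]
    by (simp add: Bochner_Integration.integral_add)
  then show ?thesis by simp
qed

lemma beta_third:
  assumes atomless: "\<And>x. measure D {x} = 0"
    and p: "p \<in> I" and q: "q \<in> I" and t: "t \<in> I" and d: "p \<noteq> q" "p \<noteq> t" "q \<noteq> t"
  shows "beta = 1/3"
proof -
  let ?E = "\<lambda>a b x. of_bool (x a = x b) :: real"
  have pm: "Measurable.pred PD (\<lambda>x. x a = x b)" if "a \<in> I" "b \<in> I" for a b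
    unfolding pred_def PD_sets PD_space
    by (intro borel_measurable_eq measurable_component_singleton) (use that in auto)
  have ie: "integrable PD (?E a b)" if "a \<in> I" "b \<in> I" for a b
    by (rule int_bounded[where B=1]) (use pm[OF that] in auto)
  have ii: "integrable PD (\<lambda>x. ind a c x * ind b c x)" if "a \<in> I" "b \<in> I" "c \<in> I" for a b c
    by (rule int_prod[where B=1 and C=1]) (use that ind_bounds in auto)
  let ?S = "\<lambda>x. ind p t x * ind q t x + ind p q x * ind t q x + ind q p x * ind t p x"
  have iS: "integrable PD ?S" using ii p q t by simp
  have iT: "integrable PD (\<lambda>x. 1 + (?E p q x + ?E p t x + ?E q t x))" using ie p q t by simp
  have IS: "(\<integral>x. ?S x \<partial>PD) = 3 * beta"
    using ii p q t d ind_beta[OF p q t d(2) d(3) d(1)] ind_beta[OF p t q d(1) d(3)[symmetric] d(2)]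
      ind_beta[OF q t p d(1)[symmetric] d(2)[symmetric] d(3)]
    by (simp add: Bochner_Integration.integral_add)
  have IT: "(\<integral>x. 1 + (?E p q x + ?E p t x + ?E q t x) \<partial>PD) = 1"
    using ie p q t eq_zero[OF atomless p q d(1)] eq_zero[OF atomless p t d(2)] eq_zero[OF atomless q t d(3)]
      prob_space.prob_space[OF PD_prob]
    by (simp add: Bochner_Integration.integral_add)
  have "(\<integral>x. 1 \<partial>PD) \<le> (\<integral>x. ?S x \<partial>PD)"
    by (rule integral_mono) (use iS in \<open>auto simp: ind_def\<close>)
  moreover have "(\<integral>x. ?S x \<partial>PD) \<le> (\<integral>x. 1 + (?E p q x + ?E p t x + ?E q t x) \<partial>PD)"
    by (rule integral_mono) (use iS iT in \<open>auto simp: ind_def\<close>)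
  ultimately show ?thesis using IS IT prob_space.prob_space[OF PD_prob] by simp
qed

end



lemma abs_mult_le1: "\<bar>a\<bar> \<le> C \<Longrightarrow> 0 \<le> s \<Longrightarrow> s \<le> 1 \<Longrightarrow> \<bar>a * (s::real)\<bar> \<le> C"
  by (metis abs_mult abs_of_nonneg mult_left_le order_trans abs_ge_zero)

lemma sq_le1: "0 \<le> a \<Longrightarrow> a \<le> 1 \<Longrightarrow> 0 \<le> b \<Longrightarrow> b \<le> 1 \<Longrightarrow> \<bar>(a - b)\<^sup>2\<bar> \<le> (1::real)"
proof -
  assume "0 \<le> a" "a \<le> 1" "0 \<le> b" "b \<le> 1"
  then have "\<bar>a - b\<bar> \<le> 1" by auto
  then show ?thesis by (simp add: abs_square_le_1)
qed

lemma proj_lemma: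
  fixes M F :: "'a measure" and S :: "'a \<Rightarrow> real"
  assumes P: "prob_space M" and sub: "subalgebra M F"
    and Sm: "S \<in> borel_measurable M" and Sb: "\<And>x. x \<in> space M \<Longrightarrow> 0 \<le> S x \<and> S x \<le> 1"
  obtains c where "c \<in> borel_measurable F" "\<And>x. 0 \<le> c x \<and> c x \<le> 1"
    "AE x in M. real_cond_exp M F S x = c x"
    "\<And>g B. g \<in> borel_measurable F \<Longrightarrow> (\<And>x. x \<in> space M \<Longrightarrow> \<bar>g x\<bar> \<le> B) \<Longrightarrow>
        (\<integral>x. (c x - S x)\<^sup>2 \<partial>M) \<le> (\<integral>x. (g x - S x)\<^sup>2 \<partial>M)"
proof -
  interpret prob_space M by (rule P)
  note Sm[measurable]
  interpret fs: finite_measure_subalgebra M F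
    by unfold_locales (rule sub)
  have iS: "integrable M S" by (rule integrable_const_bound[where B=1]) (use Sm Sb in auto)
  define ce where "ce = real_cond_exp M F S"
  define c where "c x = max 0 (min 1 (ce x))" for x
  have cem[measurable]: "ce \<in> borel_measurable F" unfolding ce_def by measurable
  have cemM[measurable]: "ce \<in> borel_measurable M" unfolding ce_def by measurable
  have cm[measurable]: "c \<in> borel_measurable F" unfolding c_def by measurable
  have cmM[measurable]: "c \<in> borel_measurable M" by (rule measurable_from_subalg[OF sub cm])
  have cb: "0 \<le> c x \<and> c x \<le> 1" for x unfolding c_def by auto
  have ae1: "AE x in M. ce x \<ge> 0" unfolding ce_def
    by (rule fs.real_cond_exp_ge_c) (use iS Sb in auto)
  have ae2: "AE x in M. ce x \<le> 1" unfolding ce_def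
    by (rule fs.real_cond_exp_le_c) (use iS Sb in auto)
  have aec: "AE x in M. ce x = c x" using ae1 ae2 by eventually_elim (auto simp: c_def)
  have main: "(\<integral>x. (c x - S x)\<^sup>2 \<partial>M) \<le> (\<integral>x. (g x - S x)\<^sup>2 \<partial>M)"
    if gm[measurable]: "g \<in> borel_measurable F" and gb: "\<And>x. x \<in> space M \<Longrightarrow> \<bar>g x\<bar> \<le> B" for g B
  proof -
    have gmM[measurable]: "g \<in> borel_measurable M" by (rule measurable_from_subalg[OF sub gm])
    define d where "d x = g x - c x" for x
    have dm[measurable]: "d \<in> borel_measurable F" unfolding d_def by measurable
    have dmM[measurable]: "d \<in> borel_measurable M" unfolding d_def by measurable
    have db: "\<bar>d x\<bar> \<le> B + 1" if "x \<in> space M" for x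
      using gb[OF that] cb[of x] by (auto simp: d_def)
    have idS: "integrable M (\<lambda>x. d x * S x)"
      by (rule integrable_const_bound[where B="B+1"]) (use db Sb abs_mult_le1 in auto)
    have idc: "integrable M (\<lambda>x. d x * c x)"
      by (rule integrable_const_bound[where B="B+1"]) (use db cb abs_mult_le1 in auto)
    have "(\<integral>x. d x * S x \<partial>M) = (\<integral>x. d x * ce x \<partial>M)"
      unfolding ce_def using fs.real_cond_exp_intg(2)[OF idS dm Sm] by simp
    also have "\<dots> = (\<integral>x. d x * c x \<partial>M)"
      by (rule integral_cong_AE) (use aec in auto)
    finally have cross: "(\<integral>x. d x * (c x - S x) \<partial>M) = 0"
      using idS idc by (simp add: right_diff_distrib)
    have i1: "integrable M (\<lambda>x. (c x - S x)\<^sup>2)"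
      by (rule integrable_const_bound[where B=1]) (use cb Sb sq_le1 in auto)
    have i2: "integrable M (\<lambda>x. d x * (c x - S x))" using idS idc by (simp add: right_diff_distrib)
    have i3: "integrable M (\<lambda>x. (g x - S x)\<^sup>2)"
    proof (rule integrable_const_bound[where B="(B+1)^2"])
      show "AE x in M. norm ((g x - S x)\<^sup>2) \<le> (B + 1)\<^sup>2"
      proof (rule AE_I2)
        fix x assume x: "x \<in> space M"
        have "\<bar>g x - S x\<bar> \<le> B + 1" using gb[OF x] Sb[OF x] by auto
        then have "\<bar>g x - S x\<bar>\<^sup>2 \<le> (B + 1)\<^sup>2" by (intro power_mono) auto
        then show "norm ((g x - S x)\<^sup>2) \<le> (B + 1)\<^sup>2" by simp
      qed
    qed measurable
    have "(\<integral>x. (c x - S x)\<^sup>2 \<partial>M) = (\<integral>x. (c x - S x)\<^sup>2 + 2 * (d x * (c x - S x)) \<partial>M)"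
      using i1 i2 cross by simp
    also have "\<dots> \<le> (\<integral>x. (g x - S x)\<^sup>2 \<partial>M)"
    proof (rule integral_mono)
      show "integrable M (\<lambda>x. (c x - S x)\<^sup>2 + 2 * (d x * (c x - S x)))" using i1 i2 by simp
      show "integrable M (\<lambda>x. (g x - S x)\<^sup>2)" by (rule i3)
      fix x
      have "(g x - S x)\<^sup>2 = (c x - S x)\<^sup>2 + 2 * (d x * (c x - S x)) + (d x)\<^sup>2"
        by (simp add: d_def power2_eq_square algebra_simps)
      then show "(c x - S x)\<^sup>2 + 2 * (d x * (c x - S x)) \<le> (g x - S x)\<^sup>2" by simp
    qed
    finally show ?thesis .
  qed
  show ?thesis
    by (rule that[OF cm cb _ main]) (use aec in \<open>auto simp: ce_def\<close>)
qed



lemma space_prior: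
  assumes "sets prior = sets (prob_algebra (borel::real measure))" "D \<in> space prior"
  shows "sets D = sets borel" "prob_space D"
  using assms sets_eq_imp_space_eq[OF assms(1)] by (auto simp: space_prob_algebra)

lemma K_meas:
  assumes sp: "sets prior = sets (prob_algebra (borel::real measure))" and fI: "finite I"
  shows "(\<lambda>D. PiM I (\<lambda>_. D)) \<in> measurable prior (prob_algebra (PiM I (\<lambda>_. (borel::real measure))))"
proof (rule measurable_prob_algebra_generated[OF sets_PiM Int_stable_prod_algebra prod_algebra_sets_into_space])
  fix a assume a: "a \<in> space prior"
  show "prob_space (PiM I (\<lambda>_. a))" using space_prior[OF sp a] by (simp add: prob_space_PiM)
  show "sets (PiM I (\<lambda>_. a)) = sets (PiM I (\<lambda>_. borel))" using space_prior[OF sp a] by (intro sets_PiM_cong) auto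
next
  fix A assume A: "A \<in> prod_algebra I (\<lambda>_. (borel::real measure))"
  then obtain E where AE: "A = Pi\<^sub>E I E" "E \<in> (\<Pi> i\<in>I. sets (borel::real measure))" by (rule prod_algebraE_all)
  have "(\<lambda>a. \<Prod>i\<in>I. emeasure a (E i)) \<in> borel_measurable prior"
  proof (intro borel_measurable_prod_ennreal)
    fix i assume "i \<in> I"
    then have "E i \<in> sets borel" using AE by auto
    then have "(\<lambda>a. emeasure a (E i)) \<in> borel_measurable (prob_algebra borel)"
      unfolding prob_algebra_def by (intro measurable_restrict_space1 measurable_emeasure_subprob_algebra)
    then show "(\<lambda>a. emeasure a (E i)) \<in> borel_measurable prior"
      using measurable_cong_sets[OF sp refl] by blast
  qed
  moreover have "emeasure (PiM I (\<lambda>_. a)) A = (\<Prod>i\<in>I. emeasure a (E i))" if a: "a \<in> space prior" for a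
  proof -
    interpret product_prob_space "\<lambda>_. a" I
      using space_prior[OF sp a]
      by (simp add: product_prob_space_def product_sigma_finite_def prob_space_imp_sigma_finite product_prob_space_axioms_def)
    show ?thesis
      unfolding AE(1) using AE(2) space_prior[OF sp a] by (intro emeasure_PiM fI) auto
  qed
  ultimately show "(\<lambda>a. emeasure (PiM I (\<lambda>_. a)) A) \<in> borel_measurable prior"
    using measurable_cong[of prior "\<lambda>a. emeasure (PiM I (\<lambda>_. a)) A" "\<lambda>a. \<Prod>i\<in>I. emeasure a (E i)"] by simp
qed

lemma vimage_const:
  assumes g: "g \<in> borel_measurable (vimage_algebra X f N)" and f: "f \<in> X \<rightarrow> space N"
    and w: "w \<in> X" "w' \<in> X" and eq: "f w = f w'"
  shows "g w = (g w' :: real)"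
proof -
  have "g -` {g w} \<inter> space (vimage_algebra X f N) \<in> sets (vimage_algebra X f N)"
    by (rule measurable_sets[OF g]) auto
  then obtain A where A: "A \<in> sets N" "g -` {g w} \<inter> X = f -` A \<inter> X"
    unfolding sets_vimage_algebra2[OF f] by auto
  have "w \<in> f -` A \<inter> X" using A(2) w by blast
  then have "w' \<in> f -` A \<inter> X" using eq w by auto
  then have "w' \<in> g -` {g w} \<inter> X" using A(2) by blast
  then show ?thesis by simp
qed

lemma meas_countable_snd:
  fixes h :: "'a \<Rightarrow> 'b::countable \<Rightarrow> real"
  assumes "\<And>t. (\<lambda>x. h x t) \<in> borel_measurable A"
  shows "(\<lambda>w. h (fst w) (snd w)) \<in> borel_measurable (A \<Otimes>\<^sub>M measure_pmf p)"
proof (rule measurable_compose_countable'[where f="\<lambda>t w. h (fst w) t" and g=snd and I=UNIV])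
  show "(\<lambda>w. h (fst w) t) \<in> borel_measurable (A \<Otimes>\<^sub>M measure_pmf p)" for t
    using measurable_compose[OF measurable_fst assms[of t], of "measure_pmf p"] by (simp add: comp_def)
  show "snd \<in> A \<Otimes>\<^sub>M measure_pmf p \<rightarrow>\<^sub>M count_space UNIV"
    using measurable_snd[of A "measure_pmf p"] measurable_cong_sets[OF refl sets_measure_pmf_count_space] by blast
qed simp


locale setting =
  fixes prior :: "real measure measure" and m :: nat and n :: "nat \<Rightarrow> nat" and i :: nat
  assumes pr: "prob_space prior" and sp: "sets prior = sets (prob_algebra borel)"
    and m2: "m \<ge> 2" and im: "i < m" and ni: "n i \<ge> 1"
    and sg: "(\<Sum>j\<in>{..<m} - {i}. n j) - 1 \<ge> 1"
begin

abbreviation "I \<equiv> data_idx m n"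
abbreviation "Ow \<equiv> own_idx n i"
abbreviation "R \<equiv> others_idx m n i"
abbreviation "K \<equiv> (\<lambda>D::real measure. PiM I (\<lambda>_. D))"
abbreviation "Bm \<equiv> prior \<bind> K"
abbreviation "Pm \<equiv> measure_pmf (pmf_of_set R)"
abbreviation "M \<equiv> model prior m n i"
abbreviation "PB \<equiv> PiM I (\<lambda>_. (borel :: real measure))"

lemma I_eq: "I = Sigma {..<m} (\<lambda>j. {..<n j})" by (auto simp: data_idx_def)
lemma R_eq: "R = Sigma ({..<m} - {i}) (\<lambda>j. {..<n j})" by (auto simp: others_idx_def)
lemma O_eq: "Ow = {i} \<times> {..<n i}" by (auto simp: own_idx_def)
lemma finI: "finite I" unfolding I_eq by auto
lemma finR: "finite R" unfolding R_eq by auto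
lemma finO: "finite Ow" unfolding O_eq by auto
lemma cardR: "card R = (\<Sum>j\<in>{..<m} - {i}. n j)" unfolding R_eq by (simp add: card_SigmaI)
lemma cardO: "card Ow = n i" unfolding O_eq by (simp add: card_cartesian_product)
lemma cardR2: "card R \<ge> 2" using cardR sg by linarith
lemma R_ne: "R \<noteq> {}" using cardR2 by auto
lemma O_ne: "Ow \<noteq> {}" using cardO ni by auto
lemma OI: "Ow \<subseteq> I" using im by (auto simp: own_idx_def data_idx_def)
lemma RI: "R \<subseteq> I" by (auto simp: others_idx_def data_idx_def)
lemma OR: "Ow \<inter> R = {}" by (auto simp: others_idx_def own_idx_def)

lemma M_eq: "M = Bm \<Otimes>\<^sub>M Pm" by (simp add: model_def)

lemma prior_in: "prior \<in> space (prob_algebra (prob_algebra borel))"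
  using pr sp by (simp add: space_prob_algebra)

lemma Kmeas: "K \<in> prior \<rightarrow>\<^sub>M prob_algebra PB"
  by (rule K_meas[OF sp finI])

lemma Kmeas2: "K \<in> prob_algebra borel \<rightarrow>\<^sub>M prob_algebra PB"
  using Kmeas measurable_cong_sets[OF sp refl] by blast
lemma Bprob: "prob_space Bm" by (rule prob_space_bind'[OF prior_in Kmeas2])
lemma Bsets: "sets Bm = sets PB" by (rule sets_bind'[OF prior_in Kmeas2])
lemma Bspace: "space Bm = space PB" by (rule sets_eq_imp_space_eq[OF Bsets])
lemma Mprob: "prob_space M" unfolding M_eq by (intro prob_space_pair Bprob prob_space_measure_pmf)
lemma Msets: "sets M = sets (PB \<Otimes>\<^sub>M Pm)" unfolding M_eq by (intro sets_pair_measure_cong Bsets) auto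
lemma Mspace: "space M = space PB \<times> UNIV"
  using sets_eq_imp_space_eq[OF Msets] by (simp add: space_pair_measure)

lemma model_int:
  assumes fm: "f \<in> borel_measurable M" and fb: "\<And>w. w \<in> space M \<Longrightarrow> \<bar>f w\<bar> \<le> C"
  shows "integral\<^sup>L M f = (\<integral>D. (\<integral>x. (\<Sum>t\<in>R. f (x, t)) / card R \<partial>K D) \<partial>prior)"
proof -
  interpret Bp: prob_space Bm by (rule Bprob)
  interpret PP: pair_prob_space Bm Pm by unfold_locales
  have fm': "f \<in> borel_measurable (Bm \<Otimes>\<^sub>M Pm)" using fm M_eq by simp
  have fi: "integrable (Bm \<Otimes>\<^sub>M Pm) f"
    by (rule finite_measure.integrable_const_bound[where B=C]) 
       (use fm' fb M_eq Mprob prob_space.finite_measure in auto)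
  have ft: "(\<lambda>x. f (x, t)) \<in> borel_measurable Bm" for t
  proof -
    have "(\<lambda>x. (x, t)) \<in> measurable Bm (Bm \<Otimes>\<^sub>M Pm)" by measurable
    from measurable_compose[OF this fm'] show ?thesis by (simp add: comp_def)
  qed
  have gm: "(\<lambda>x. (\<Sum>t\<in>R. f (x, t)) / card R) \<in> borel_measurable PB"
    using ft measurable_cong_sets[OF Bsets refl] by (intro borel_measurable_divide borel_measurable_sum) auto
  have gb: "\<bar>(\<Sum>t\<in>R. f (x, t)) / card R\<bar> \<le> C" if x: "x \<in> space PB" for x
  proof -
    have "\<bar>\<Sum>t\<in>R. f (x, t)\<bar> \<le> (\<Sum>t\<in>R. \<bar>f (x, t)\<bar>)" by (rule sum_abs)
    also have "\<dots> \<le> (\<Sum>t\<in>R. C)" using x fb Mspace by (intro sum_mono) auto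
    finally show ?thesis using R_ne finR by (simp add: abs_divide divide_le_eq card_gt_0_iff mult.commute)
  qed
  have "integral\<^sup>L M f = (\<integral>x. (\<integral>t. f (x, t) \<partial>Pm) \<partial>Bm)"
    using PP.integral_fst'[OF fi] M_eq by simp
  also have "\<dots> = (\<integral>x. (\<Sum>t\<in>R. f (x, t)) / card R \<partial>Bm)"
    using integral_pmf_of_set[OF R_ne finR] by simp
  also have "\<dots> = (\<integral>D. (\<integral>x. (\<Sum>t\<in>R. f (x, t)) / card R \<partial>K D) \<partial>prior)"
    by (rule integral_bind[OF gm gb measurable_prob_algebraD[OF Kmeas], where B'=1])
       (use pr prob_space.finite_measure in \<open>auto intro!: AE_I2 simp: space_prior[OF sp] prob_space.emeasure_space_1 prob_space_PiM\<close>)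
  finally show ?thesis .
qed


abbreviation "NN \<equiv> PiM Ow (\<lambda>_. (borel :: real measure)) \<Otimes>\<^sub>M (borel :: real measure)"
definition fmap :: "((nat \<times> nat \<Rightarrow> real) \<times> (nat \<times> nat)) \<Rightarrow> _" where
  "fmap w = (restrict (fst w) Ow, T_val w)"

lemma G_eq: "info_alg prior m n i = vimage_algebra (space M) fmap NN"
  unfolding info_alg_def fmap_def by simp

lemma fmap_space: "fmap \<in> space M \<rightarrow> space NN"
  by (auto simp: fmap_def space_pair_measure space_PiM)

lemma coord_meas: "(\<lambda>x. x t) \<in> borel_measurable Bm"
proof (cases "t \<in> I")
  case True
  then have "(\<lambda>x. x t) \<in> borel_measurable PB" by simp
  then show ?thesis using measurable_cong_sets[OF Bsets refl] by blast
next
  case False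
  have "(\<lambda>x. (undefined::real)) \<in> borel_measurable Bm" by simp
  moreover have "x t = undefined" if "x \<in> space Bm" for x
    using that False by (cases t) (auto simp: Bspace space_PiM PiE_def extensional_def)
  ultimately show ?thesis using measurable_cong[of Bm "\<lambda>x. x t" "\<lambda>x. undefined"] by simp
qed

lemma pred_Bm[measurable]: "Measurable.pred Bm (\<lambda>x. x r \<le> x t)"
  unfolding pred_def by (rule borel_measurable_le[OF coord_meas coord_meas])

lemma ind_Bm[measurable]: "ind r t \<in> borel_measurable Bm"
  unfolding ind_def by measurable

lemma T_meas: "T_val \<in> borel_measurable M"
proof -
  have "(\<lambda>w. (\<lambda>x t. x t) (fst w) (snd w)) \<in> borel_measurable (Bm \<Otimes>\<^sub>M Pm)"
    by (rule meas_countable_snd) (rule coord_meas)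
  then show ?thesis by (simp add: M_eq T_val_def[abs_def])
qed

lemma fmap_meas: "fmap \<in> M \<rightarrow>\<^sub>M NN"
  unfolding fmap_def
proof (rule measurable_Pair)
  have f: "fst \<in> M \<rightarrow>\<^sub>M PB" using M_eq measurable_fst measurable_cong_sets[OF refl Bsets] by metis
  have r: "(\<lambda>f. restrict f Ow) \<in> PB \<rightarrow>\<^sub>M PiM Ow (\<lambda>_. borel)" by (rule measurable_restrict_subset[OF OI])
  show "(\<lambda>w. restrict (fst w) Ow) \<in> M \<rightarrow>\<^sub>M PiM Ow (\<lambda>_. borel)"
    using measurable_compose[OF f r] by simp
  show "T_val \<in> borel_measurable M" by (rule T_meas)
qed

lemma subalg: "subalgebra M (info_alg prior m n i)"
  unfolding subalgebra_def G_eq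
proof
  show "space (vimage_algebra (space M) fmap NN) = space M" by simp
  show "sets (vimage_algebra (space M) fmap NN) \<subseteq> sets M"
    unfolding sets_vimage_algebra2[OF fmap_space] using fmap_meas by auto
qed

lemma G_const:
  assumes g: "g \<in> borel_measurable (info_alg prior m n i)" and w: "w \<in> space M" "w' \<in> space M"
    and e1: "\<And>u. u \<in> Ow \<Longrightarrow> fst w u = fst w' u" and e2: "T_val w = T_val w'"
  shows "g w = (g w' :: real)"
proof (rule vimage_const[OF g[unfolded G_eq] fmap_space w])
  show "fmap w = fmap w'" using e1 e2 by (auto simp: fmap_def restrict_def)
qed

lemma stat_eq: "stat m n i (x, t) = (\<Sum>r\<in>R - {t}. ind r t x) / card (R - {t})"
proof -
  have f: "finite (R - {t})" using finR by auto
  have "size (filter_mset (\<lambda>s. s \<le> x t) (image_mset x (mset_set (R - {t}))))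
      = card {r \<in> R - {t}. x r \<le> x t}"
    using f by (simp add: filter_mset_image_mset)
  moreover have "(\<Sum>r\<in>R - {t}. ind r t x) = real (card {r \<in> R - {t}. x r \<le> x t})"
    using f unfolding ind_def by (simp add: Int_def)
  ultimately show ?thesis
    using f by (simp add: stat_def ecdf_def Z_set_def T_val_def)
qed

lemma stat_meas: "stat m n i \<in> borel_measurable M"
proof -
  have "(\<lambda>x. (\<Sum>r\<in>R - {t}. ind r t x) / card (R - {t})) \<in> borel_measurable Bm" for t
  proof -
    show ?thesis by measurable
  qed
  then have "(\<lambda>w. (\<lambda>x t. (\<Sum>r\<in>R - {t}. ind r t x) / card (R - {t})) (fst w) (snd w)) \<in> borel_measurable (Bm \<Otimes>\<^sub>M Pm)"
    by (intro meas_countable_snd)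
  then show ?thesis by (simp add: M_eq stat_eq[symmetric])
qed

lemma stat_bounds: "0 \<le> stat m n i w \<and> stat m n i w \<le> 1"
proof -
  obtain x t where w: "w = (x, t)" by (cases w)
  have "(\<Sum>r\<in>R - {t}. ind r t x) \<le> (\<Sum>r\<in>R - {t}. 1)" by (intro sum_mono) (simp add: ind_def)
  moreover have "0 \<le> (\<Sum>r\<in>R - {t}. ind r t x)" by (intro sum_nonneg) (simp add: ind_def)
  ultimately show ?thesis unfolding w stat_eq by (auto simp: divide_le_eq_1)
qed


lemma sec_meas:
  assumes "f \<in> borel_measurable M"
  shows "(\<lambda>x. f (x, t)) \<in> borel_measurable PB"
proof -
  have "(\<lambda>x. (x, t)) \<in> measurable Bm (Bm \<Otimes>\<^sub>M Pm)" by measurable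
  from measurable_compose[OF this assms[unfolded M_eq]] have "(\<lambda>x. f (x, t)) \<in> borel_measurable Bm"
    by (simp add: comp_def)
  then show ?thesis using measurable_cong_sets[OF Bsets refl] by blast
qed

lemma dm_D: "D \<in> space prior \<Longrightarrow> dm D I"
  using space_prior[OF sp] finI by (auto simp: dm_def)

lemma PD_space': "D \<in> space prior \<Longrightarrow> space (K D) = space PB"
  using space_prior[OF sp] by (intro sets_eq_imp_space_eq sets_PiM_cong) auto

lemma PD_sets': "D \<in> space prior \<Longrightarrow> sets (K D) = sets PB"
  using space_prior[OF sp] by (intro sets_PiM_cong) auto

lemma PD_meas: "D \<in> space prior \<Longrightarrow> f \<in> borel_measurable PB \<Longrightarrow> f \<in> borel_measurable (K D)"
  using measurable_cong_sets[OF PD_sets' refl] by blast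

lemma perD_lower:
  assumes Dsp: "D \<in> space prior" and t: "t \<in> R"
    and cm: "c \<in> borel_measurable (info_alg prior m n i)" and cb: "\<And>w. 0 \<le> c w \<and> c w \<le> 1"
  shows "(dm.alpha D - dm.beta D) / (card R - 1) \<le> (\<integral>x. (c (x,t) - stat m n i (x,t))\<^sup>2 \<partial>K D)"
proof -
  interpret dm D I by (rule dm_D[OF Dsp])
  have cM: "c \<in> borel_measurable M" by (rule measurable_from_subalg[OF subalg cm])
  have hm: "(\<lambda>x. c (x, t)) \<in> borel_measurable PD" by (rule PD_meas[OF Dsp sec_meas[OF cM]])
  have cY: "card (R - {t}) = card R - 1" using t finR by simp
  have Y: "R - {t} \<subseteq> I" "R - {t} \<noteq> {}"
  proof -
    show "R - {t} \<subseteq> I" using RI by blast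
    show "R - {t} \<noteq> {}"
    proof
      assume e: "R - {t} = {}"
      have "card (R - {t}) = 0" unfolding e by simp
      then show False using cY cardR2 by linarith
    qed
  qed
  have tI: "t \<in> I" "t \<notin> R - {t}" using t RI by auto
  have hc: "c (x(r := y), t) = c (x, t)" if r: "r \<in> R - {t}" and x: "x \<in> space PD" for r x y
  proof (rule G_const[OF cm])
    show "(x(r := y), t) \<in> space M" "(x, t) \<in> space M"
      using x r RI by (auto simp: Mspace space_PiM PiE_def extensional_def)
    show "fst (x(r := y), t) u = fst (x, t) u" if "u \<in> Ow" for u using that r OR by auto
    show "T_val (x(r := y), t) = T_val (x, t)" using r by (auto simp: T_val_def)
  qed
  have "(\<integral>x. (c (x,t) - stat m n i (x,t))\<^sup>2 \<partial>K D)
      = (\<integral>x. (c (x,t) - (\<Sum>r\<in>R - {t}. ind r t x) / card (R - {t}))\<^sup>2 \<partial>PD)"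
    by (simp add: stat_eq)
  also have "\<dots> = (\<integral>x. (c (x,t) - F (x t))\<^sup>2 \<partial>PD) + (alpha - beta) / card (R - {t})"
    by (rule E1[OF Y tI hm, where B=1]) (use cb hc in auto)
  finally have eq: "(\<integral>x. (c (x,t) - stat m n i (x,t))\<^sup>2 \<partial>K D)
      = (\<integral>x. (c (x,t) - F (x t))\<^sup>2 \<partial>PD) + (alpha - beta) / card (R - {t})" .
  have "0 \<le> (\<integral>x. (c (x,t) - F (x t))\<^sup>2 \<partial>PD)" by simp
  moreover note cY
  moreover have "real (card R - 1) = real (card R) - 1" using cardR2 by auto
  ultimately show ?thesis using eq by simp
qed


definition gO :: "(nat \<times> nat \<Rightarrow> real) \<times> (nat \<times> nat) \<Rightarrow> real" where
  "gO w = (\<Sum>u\<in>Ow. ind u (snd w) (fst w)) / card Ow"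

lemma gO_bounds: "0 \<le> gO w \<and> gO w \<le> 1"
proof -
  have "(\<Sum>u\<in>Ow. ind u (snd w) (fst w)) \<le> (\<Sum>u\<in>Ow. 1)" by (intro sum_mono) (simp add: ind_def)
  moreover have "0 \<le> (\<Sum>u\<in>Ow. ind u (snd w) (fst w))" by (intro sum_nonneg) (simp add: ind_def)
  ultimately show ?thesis unfolding gO_def by (auto simp: divide_le_eq_1)
qed

lemma perD_upper:
  assumes Dsp: "D \<in> space prior" and t: "t \<in> R"
  shows "(\<integral>x. (gO (x,t) - stat m n i (x,t))\<^sup>2 \<partial>K D)
     = (dm.alpha D - dm.beta D) * (1 / card Ow + 1 / (card R - 1))"
proof -
  interpret dm D I by (rule dm_D[OF Dsp])
  have cY: "card (R - {t}) = card R - 1" using t finR by simp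
  have Y: "R - {t} \<subseteq> I" "R - {t} \<noteq> {}"
  proof -
    show "R - {t} \<subseteq> I" using RI by blast
    show "R - {t} \<noteq> {}"
    proof
      assume e: "R - {t} = {}"
      have "card (R - {t}) = 0" unfolding e by simp
      then show False using cY cardR2 by linarith
    qed
  qed
  have tI: "t \<in> I" "t \<notin> R - {t}" "t \<notin> Ow" using t RI OR by auto
  have gm: "(\<lambda>x. (\<Sum>u\<in>Ow. ind u t x) / card Ow) \<in> borel_measurable PD"
    using OI tI by (intro borel_measurable_divide borel_measurable_sum ind_meas) auto
  have gb: "\<bar>(\<Sum>u\<in>Ow. ind u t x) / card Ow\<bar> \<le> 1" for x
    using gO_bounds[of "(x, t)"] unfolding gO_def by (metis abs_of_nonneg fst_conv snd_conv)
  have gc: "(\<Sum>u\<in>Ow. ind u t (x(r := y))) / card Ow = (\<Sum>u\<in>Ow. ind u t x) / card Ow"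
    if r: "r \<in> R - {t}" for r x y
  proof -
    have "ind u t (x(r := y)) = ind u t x" if "u \<in> Ow" for u
      using that r OR by (auto simp: ind_def)
    then show ?thesis by simp
  qed
  have Fc: "F ((x(r := y)) t) = F (x t)" if "r \<in> Ow" for r x y using that tI by auto
  have "(\<integral>x. (gO (x,t) - stat m n i (x,t))\<^sup>2 \<partial>K D)
      = (\<integral>x. ((\<Sum>u\<in>Ow. ind u t x) / card Ow - (\<Sum>r\<in>R - {t}. ind r t x) / card (R - {t}))\<^sup>2 \<partial>PD)"
    by (simp add: stat_eq gO_def)
  also have "\<dots> = (\<integral>x. ((\<Sum>u\<in>Ow. ind u t x) / card Ow - F (x t))\<^sup>2 \<partial>PD) + (alpha - beta) / card (R - {t})"
    by (rule E1[OF Y tI(1,2) gm, where B=1]) (use gb gc in auto)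
  also have "(\<integral>x. ((\<Sum>u\<in>Ow. ind u t x) / card Ow - F (x t))\<^sup>2 \<partial>PD)
      = (\<integral>x. (F (x t) - (\<Sum>u\<in>Ow. ind u t x) / card Ow)\<^sup>2 \<partial>PD)"
    by (simp add: power2_commute)
  also have "\<dots> = (\<integral>x. (F (x t) - F (x t))\<^sup>2 \<partial>PD) + (alpha - beta) / card Ow"
    by (rule E1[OF OI O_ne tI(1,3) Ft_meas[OF tI(1)], where B=1]) (use F_bounds Fc in \<open>auto simp: abs_le_iff\<close>)
  finally have eq: "(\<integral>x. (gO (x,t) - stat m n i (x,t))\<^sup>2 \<partial>K D) = (alpha - beta) / card Ow + (alpha - beta) / card (R - {t})"
    by simp
  have "real (card R - 1) = real (card R) - 1" using cardR2 by auto
  then show ?thesis unfolding eq cY by (simp add: field_simps)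
qed


lemma gO_meas: "gO \<in> borel_measurable (info_alg prior m n i)"
proof -
  define \<phi> where "\<phi> p = (\<Sum>u\<in>Ow. of_bool (fst p u \<le> snd p)) / real (card Ow)"
    for p :: "(nat \<times> nat \<Rightarrow> real) \<times> real"
  have pm: "Measurable.pred NN (\<lambda>p. fst p u \<le> snd p)" if "u \<in> Ow" for u
  proof -
    have "(\<lambda>p. fst p u) \<in> borel_measurable NN"
      using measurable_compose[OF measurable_fst measurable_component_singleton[OF that], of "\<lambda>_. borel" borel] by (simp add: comp_def)
    then show ?thesis unfolding pred_def by (intro borel_measurable_le) auto
  qed
  have \<phi>m: "\<phi> \<in> borel_measurable NN"
    unfolding \<phi>_def using pm by (intro borel_measurable_divide borel_measurable_sum) auto
  have "(\<lambda>w. \<phi> (fmap w)) \<in> borel_measurable (vimage_algebra (space M) fmap NN)"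
    using measurable_compose[OF measurable_vimage_algebra1[OF fmap_space] \<phi>m] by (simp add: comp_def)
  moreover have "\<phi> (fmap w) = gO w" for w
    unfolding \<phi>_def gO_def fmap_def ind_def T_val_def by (intro arg_cong2[where f="(/)"] sum.cong) auto
  ultimately show ?thesis unfolding G_eq by simp
qed

lemma avg:
  assumes Dsp: "D \<in> space prior" and pm: "\<And>t. t \<in> R \<Longrightarrow> (\<lambda>x. \<phi> x t) \<in> borel_measurable PB"
    and pb: "\<And>x t. \<bar>\<phi> x t\<bar> \<le> (1::real)"
  shows "(\<integral>x. (\<Sum>t\<in>R. \<phi> x t) / card R \<partial>K D) = (\<Sum>t\<in>R. (\<integral>x. \<phi> x t \<partial>K D)) / card R"
proof -
  interpret dm D I by (rule dm_D[OF Dsp])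
  have "integrable PD (\<lambda>x. \<phi> x t)" if "t \<in> R" for t
    by (rule int_bounded[where B=1]) (use PD_meas[OF Dsp pm[OF that]] pb in auto)
  then show ?thesis by (simp add: Bochner_Integration.integral_sum)
qed

lemma psi_int:
  assumes fm: "f \<in> borel_measurable PB" and fb: "\<And>x. \<bar>f x\<bar> \<le> (1::real)"
  shows "integrable prior (\<lambda>D. \<integral>x. f x \<partial>K D)"
proof (rule finite_measure.integrable_const_bound[where B=1])
  show "finite_measure prior" using pr by (rule prob_space.finite_measure)
  show "(\<lambda>D. \<integral>x. f x \<partial>K D) \<in> borel_measurable prior"
    using measurable_compose[OF measurable_prob_algebraD[OF Kmeas] integral_measurable_subprob_algebra[OF fm]]
    by (simp add: comp_def)
  show "AE D in prior. norm (\<integral>x. f x \<partial>K D) \<le> 1"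
  proof (rule AE_I2)
    fix D assume Dsp: "D \<in> space prior"
    interpret dm D I by (rule dm_D[OF Dsp])
    have i: "integrable PD f" by (rule int_bounded[where B=1]) (use PD_meas[OF Dsp fm] fb in auto)
    have "norm (\<integral>x. f x \<partial>PD) \<le> (\<integral>x. norm (f x) \<partial>PD)" by (rule integral_norm_bound)
    also have "\<dots> \<le> (\<integral>x. 1 \<partial>PD)" 
      by (rule integral_mono) (use i fb in auto)
    also have "\<dots> = 1" using prob_space.prob_space[OF PD_prob] by simp
    finally show "norm (\<integral>x. f x \<partial>K D) \<le> 1" .
  qed
qed


lemma avg_bound:
  assumes "\<And>t. 0 \<le> \<phi> t \<and> \<phi> t \<le> (1::real)"
  shows "\<bar>(\<Sum>t\<in>R. \<phi> t) / card R\<bar> \<le> 1"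
proof -
  have "0 \<le> (\<Sum>t\<in>R. \<phi> t)" using assms by (intro sum_nonneg) auto
  moreover have "(\<Sum>t\<in>R. \<phi> t) \<le> (\<Sum>t\<in>R. 1)" using assms by (intro sum_mono) auto
  ultimately show ?thesis using cardR2 by (auto simp: divide_le_eq_1)
qed

lemma sq01: "0 \<le> a \<and> a \<le> 1 \<Longrightarrow> 0 \<le> b \<and> b \<le> 1 \<Longrightarrow> 0 \<le> (a - b)\<^sup>2 \<and> (a - b)\<^sup>2 \<le> (1::real)"
  using sq_le1[of a b] by auto

lemma alpha_beta_sixth:
  assumes Dsp: "D \<in> space prior" and at: "\<forall>x. measure D {x} = 0"
  shows "dm.alpha D - dm.beta D = 1/6"
proof -
  interpret dm D I by (rule dm_D[OF Dsp])
  obtain p where p: "p \<in> Ow" using O_ne by auto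
  obtain t where t: "t \<in> R" using R_ne by auto
  have "R - {t} \<noteq> {}"
  proof
    assume e: "R - {t} = {}"
    have "card (R - {t}) = 0" unfolding e by simp
    then show False using t finR cardR2 by simp
  qed
  then obtain q where q: "q \<in> R" "q \<noteq> t" by auto
  have pI: "p \<in> I" "q \<in> I" "t \<in> I" using p q t OI RI by auto
  have d: "p \<noteq> q" "p \<noteq> t" using p q t OR by auto
  have "alpha = 1/2" using alpha_half[of p t] at pI d by auto
  moreover have "beta = 1/3" using beta_third[of p q t] at pI d q by auto
  ultimately show ?thesis by simp
qed

theorem main:
  shows "0 \<le> expected_loss prior m n i
      \<and> expected_loss prior m n i
          \<le> (1/4) * (1 / real (n i) + 1 / (real (\<Sum>j\<in>{..<m} - {i}. n j) - 1))
      \<and> ((AE D in prior. \<forall>x. measure D {x} = 0) \<longrightarrow>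
           1 / (6 * (real (\<Sum>j\<in>{..<m} - {i}. n j) - 1)) \<le> expected_loss prior m n i
           \<and> expected_loss prior m n i
               \<le> (1/6) * (1 / real (n i) + 1 / (real (\<Sum>j\<in>{..<m} - {i}. n j) - 1)))"
proof -
  let ?S = "stat m n i"
  let ?G = "info_alg prior m n i"
  define z where "z = real (card R) - 1"
  define k where "k = 1 / real (card Ow) + 1 / z"
  have z1: "z \<ge> 1" using cardR2 by (simp add: z_def)
  have k0: "k \<ge> 0" using z1 by (simp add: k_def)
  have zR: "real (card R - 1) = z" using cardR2 by (auto simp: z_def)
  have zS: "real (\<Sum>j\<in>{..<m} - {i}. n j) - 1 = z" unfolding z_def cardR by (simp add: of_nat_sum)
  have kS: "1 / real (n i) + 1 / (real (\<Sum>j\<in>{..<m} - {i}. n j) - 1) = k"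
    unfolding k_def zS cardO ..
  obtain c where cG: "c \<in> borel_measurable ?G" and cb: "\<And>w. 0 \<le> c w \<and> c w \<le> 1"
    and aec: "AE w in M. real_cond_exp M ?G ?S w = c w"
    and cproj: "\<And>g B. g \<in> borel_measurable ?G \<Longrightarrow> (\<And>w. w \<in> space M \<Longrightarrow> \<bar>g w\<bar> \<le> B) \<Longrightarrow>
        (\<integral>w. (c w - ?S w)\<^sup>2 \<partial>M) \<le> (\<integral>w. (g w - ?S w)\<^sup>2 \<partial>M)"
    using proj_lemma[OF Mprob subalg stat_meas, of thesis] stat_bounds by blast
  have cM[measurable]: "c \<in> borel_measurable M" by (rule measurable_from_subalg[OF subalg cG])
  have SM[measurable]: "?S \<in> borel_measurable M" by (rule stat_meas)
  have gM[measurable]: "gO \<in> borel_measurable M" by (rule measurable_from_subalg[OF subalg gO_meas])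
  have EL: "expected_loss prior m n i = (\<integral>w. (c w - ?S w)\<^sup>2 \<partial>M)"
    unfolding expected_loss_def loss_def
    by (rule integral_cong_AE) (use aec in auto)
  have nonneg: "0 \<le> expected_loss prior m n i"
    unfolding expected_loss_def loss_def by (rule Bochner_Integration.integral_nonneg) simp
  define fL where "fL w = (c w - ?S w)\<^sup>2" for w
  define fU where "fU w = (gO w - ?S w)\<^sup>2" for w
  have fLm: "fL \<in> borel_measurable M" unfolding fL_def by measurable
  have fUm: "fU \<in> borel_measurable M" unfolding fU_def by measurable
  have fLb: "0 \<le> fL w \<and> fL w \<le> 1" for w unfolding fL_def by (rule sq01[OF cb stat_bounds])
  have fUb: "0 \<le> fU w \<and> fU w \<le> 1" for w unfolding fU_def by (rule sq01[OF gO_bounds stat_bounds])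
  define \<psi>L where "\<psi>L D = (\<integral>x. (\<Sum>t\<in>R. fL (x, t)) / card R \<partial>K D)" for D
  define \<psi>U where "\<psi>U D = (\<integral>x. (\<Sum>t\<in>R. fU (x, t)) / card R \<partial>K D)" for D
  have eL: "(\<integral>w. fL w \<partial>M) = (\<integral>D. \<psi>L D \<partial>prior)"
    unfolding \<psi>L_def by (rule model_int[OF fLm, where C=1]) (use fLb in auto)
  have eU: "(\<integral>w. fU w \<partial>M) = (\<integral>D. \<psi>U D \<partial>prior)"
    unfolding \<psi>U_def by (rule model_int[OF fUm, where C=1]) (use fUb in auto)
  have iL: "integrable prior \<psi>L" unfolding \<psi>L_def
    by (rule psi_int) (use sec_meas[OF fLm] fLb avg_bound in auto)
  have iU: "integrable prior \<psi>U" unfolding \<psi>U_def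
    by (rule psi_int) (use sec_meas[OF fUm] fUb avg_bound in auto)
  have \<psi>U_eq: "\<psi>U D = (dm.alpha D - dm.beta D) * k" if Dsp: "D \<in> space prior" for D
  proof -
    have "\<psi>U D = (\<Sum>t\<in>R. (\<integral>x. fU (x, t) \<partial>K D)) / card R"
      unfolding \<psi>U_def by (rule avg[OF Dsp]) (use sec_meas[OF fUm] fUb in auto)
    also have "\<dots> = (\<Sum>t\<in>R. (dm.alpha D - dm.beta D) * k) / card R"
      using perD_upper[OF Dsp] zR by (intro arg_cong2[where f="(/)"] sum.cong) (auto simp: fU_def k_def)
    also have "\<dots> = (dm.alpha D - dm.beta D) * k" using cardR2 by simp
    finally show ?thesis .
  qed
  have \<psi>L_ge: "(dm.alpha D - dm.beta D) / z \<le> \<psi>L D" if Dsp: "D \<in> space prior" for D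
  proof -
    have "(dm.alpha D - dm.beta D) / z = (\<Sum>t\<in>R. (dm.alpha D - dm.beta D) / z) / card R" using cardR2 by simp
    also have "\<dots> \<le> (\<Sum>t\<in>R. (\<integral>x. fL (x, t) \<partial>K D)) / card R"
      using perD_lower[OF Dsp _ cG cb] zR
      by (intro divide_right_mono sum_mono) (auto simp: fL_def)
    also have "\<dots> = \<psi>L D"
      unfolding \<psi>L_def by (rule avg[OF Dsp, symmetric]) (use sec_meas[OF fLm] fLb in auto)
    finally show ?thesis .
  qed
  have EL_le: "expected_loss prior m n i \<le> (\<integral>D. \<psi>U D \<partial>prior)"
    unfolding EL eU[symmetric] fU_def by (rule cproj[OF gO_meas, where B=1]) (use gO_bounds in auto)
  have EL_eq: "expected_loss prior m n i = (\<integral>D. \<psi>L D \<partial>prior)"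
    unfolding EL eL[symmetric] fL_def ..
  have pu: "measure prior (space prior) = 1" using pr by (rule prob_space.prob_space)
  have up: "expected_loss prior m n i \<le> (1/4) * k"
  proof -
    have "(\<integral>D. \<psi>U D \<partial>prior) \<le> (\<integral>D. (1/4) * k \<partial>prior)"
    proof (rule integral_mono[OF iU])
      show "integrable prior (\<lambda>D. (1/4) * k)" by (rule finite_measure.integrable_const[OF prob_space.finite_measure[OF pr]])
      fix D assume Dsp: "D \<in> space prior"
      have "dm.alpha D - dm.beta D \<le> 1/4" using dm.alpha_beta_le[OF dm_D[OF Dsp]] .
      then show "\<psi>U D \<le> (1/4) * k" unfolding \<psi>U_eq[OF Dsp] using k0 by (intro mult_right_mono) auto
    qed
    also have "\<dots> = (1/4) * k" using pu by simp
    finally show ?thesis using EL_le by simp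
  qed
  have at: "1 / (6 * z) \<le> expected_loss prior m n i \<and> expected_loss prior m n i \<le> (1/6) * k"
    if AEat: "AE D in prior. \<forall>x. measure D {x} = 0"
  proof
    have "(\<integral>D. 1 / (6 * z) \<partial>prior) \<le> (\<integral>D. \<psi>L D \<partial>prior)"
    proof (rule integral_mono_AE[OF _ iL])
      show "integrable prior (\<lambda>D. 1 / (6 * z))" by (rule finite_measure.integrable_const[OF prob_space.finite_measure[OF pr]])
      show "AE D in prior. 1 / (6 * z) \<le> \<psi>L D"
      proof -
        have "AE D in prior. (\<forall>x. measure D {x} = 0) \<longrightarrow> 1 / (6 * z) \<le> \<psi>L D"
        proof (rule AE_I2, rule impI)
          fix D assume Dsp: "D \<in> space prior" and a: "\<forall>x. measure D {x} = 0"
          show "1 / (6 * z) \<le> \<psi>L D"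
            using \<psi>L_ge[OF Dsp] alpha_beta_sixth[OF Dsp a] by simp
        qed
        with AEat show ?thesis by eventually_elim auto
      qed
    qed
    then show "1 / (6 * z) \<le> expected_loss prior m n i" using EL_eq pu by simp
    have "(\<integral>D. \<psi>U D \<partial>prior) = (\<integral>D. (1/6) * k \<partial>prior)"
    proof (rule integral_cong_AE)
      show "\<psi>U \<in> borel_measurable prior" using iU by auto
      show "(\<lambda>D. (1/6) * k) \<in> borel_measurable prior" by simp
      show "AE D in prior. \<psi>U D = (1/6) * k"
      proof -
        have "AE D in prior. (\<forall>x. measure D {x} = 0) \<longrightarrow> \<psi>U D = (1/6) * k"
        proof (rule AE_I2, rule impI)
          fix D assume Dsp: "D \<in> space prior" and a: "\<forall>x. measure D {x} = 0"
          show "\<psi>U D = (1/6) * k"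
            using \<psi>U_eq[OF Dsp] alpha_beta_sixth[OF Dsp a] by simp
        qed
        with AEat show ?thesis by eventually_elim auto
      qed
    qed
    then show "expected_loss prior m n i \<le> (1/6) * k" using EL_le pu by simp
  qed
  have kS': "1 / real (n i) + 1 / z = k" using kS unfolding zS .
  show ?thesis unfolding zS kS' using nonneg up at by auto
qed

end


theorem proposition1:
  fixes prior :: "real measure measure" and m :: nat and n :: "nat \<Rightarrow> nat" and i :: nat
  assumes "prob_space prior"
    and "sets prior = sets (prob_algebra borel)"
    and "m \<ge> 2" and "i < m"
    and "n i \<ge> 1"
    and "(\<Sum>j\<in>{..<m} - {i}. n j) - 1 \<ge> 1"
  shows "0 \<le> expected_loss prior m n i
      \<and> expected_loss prior m n i
          \<le> (1/4) * (1 / real (n i) + 1 / (real (\<Sum>j\<in>{..<m} - {i}. n j) - 1))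
      \<and> ((AE D in prior. \<forall>x. measure D {x} = 0) \<longrightarrow>
           1 / (6 * (real (\<Sum>j\<in>{..<m} - {i}. n j) - 1)) \<le> expected_loss prior m n i
           \<and> expected_loss prior m n i
               \<le> (1/6) * (1 / real (n i) + 1 / (real (\<Sum>j\<in>{..<m} - {i}. n j) - 1)))"
proof -
  interpret setting prior m n i by (rule setting.intro) (rule assms)+
  show ?thesis by (rule main)
qed

end
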